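(* Let $f^{(0)}(w),\dots,f^{(n)}(w)$ be real $C^2$ functions in a Jordan domain in $\mathbb{C}$ (coordinate $w=x+iy$) such that $f^{(0)}_{ww}f^{(0)}_{\bar w\bar w}>0$. Then $f(w,t)=\sum_{m=0}^n f^{(m)}(w)t^m/m!$ satisfies $f_{w\bar w}=t\sqrt{f_{ww}f_{\bar w\bar w}}+o(t^n)$ as $t\to0$ if and only if, for $m=0,\dots,n$, $$f^{(m)}_{w\bar w}=\frac{m\sum_{r=0}^{m-1}\binom{m-1}{r}f^{(r)}_{ww}f^{(m-r-1)}_{\bar w\bar w}-\frac{1}{m+1}\sum_{r=2}^{m-1}\binom{m+1}{r}f^{(r)}_{w\bar w}f^{(m-r+1)}_{w\bar w}}{2^{1-\delta_{m1}}\sqrt{f^{(0)}_{ww}f^{(0)}_{\bar w\bar w}}}.$$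
   Context: Wirtinger derivatives: $f_w=\tfrac12(f_x-if_y)$, $f_{\bar w}=\tfrac12(f_x+if_y)$. $\delta_{mn}=1$ if $m=n$, else $0$; empty sums are $0$. *)

theory Defs
  imports "HOL-Analysis.Analysis" "HOL-Library.Complex_Order" "HOL-Library.Landau_Symbols"
begin

definition dx :: "(complex \<Rightarrow> 'a::real_normed_vector) \<Rightarrow> complex \<Rightarrow> 'a" where
  "dx h w = vector_derivative (\<lambda>s::real. h (w + of_real s)) (at 0)"

definition dy :: "(complex \<Rightarrow> 'a::real_normed_vector) \<Rightarrow> complex \<Rightarrow> 'a" where
  "dy h w = vector_derivative (\<lambda>s::real. h (w + \<i> * of_real s)) (at 0)"

definition Dw :: "(complex \<Rightarrow> complex) \<Rightarrow> complex \<Rightarrow> complex" where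
  "Dw h w = (dx h w - \<i> * dy h w) / 2"

definition Dwb :: "(complex \<Rightarrow> complex) \<Rightarrow> complex \<Rightarrow> complex" where
  "Dwb h w = (dx h w + \<i> * dy h w) / 2"

definition f_ww :: "(complex \<Rightarrow> real) \<Rightarrow> complex \<Rightarrow> complex" where
  "f_ww g = Dw (Dw (\<lambda>z. complex_of_real (g z)))"

definition f_wwb :: "(complex \<Rightarrow> real) \<Rightarrow> complex \<Rightarrow> complex" where
  "f_wwb g = Dw (Dwb (\<lambda>z. complex_of_real (g z)))"

definition f_wbwb :: "(complex \<Rightarrow> real) \<Rightarrow> complex \<Rightarrow> complex" where
  "f_wbwb g = Dwb (Dwb (\<lambda>z. complex_of_real (g z)))"

definition C2_on :: "complex set \<Rightarrow> (complex \<Rightarrow> real) \<Rightarrow> bool" where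
  "C2_on D g \<longleftrightarrow>
     (\<forall>w\<in>D. g differentiable (at w) \<and> dx g differentiable (at w) \<and> dy g differentiable (at w))
     \<and> continuous_on D (dx (dx g)) \<and> continuous_on D (dy (dx g))
     \<and> continuous_on D (dx (dy g)) \<and> continuous_on D (dy (dy g))"

definition jordan_domain :: "complex set \<Rightarrow> bool" where
  "jordan_domain D \<longleftrightarrow> (\<exists>c. simple_path c \<and> pathfinish c = pathstart c \<and> D = inside (path_image c))"

end

theory Submission
  imports Defs "HOL-Computational_Algebra.Polynomial"
begin


lemma dir_works:
  fixes h :: "complex \<Rightarrow> 'a::real_normed_vector"
  assumes "h differentiable (at z)"
  shows "((\<lambda>s::real. h (z + d * of_real s)) has_vector_derivative
           vector_derivative (\<lambda>s::real. h (z + d * of_real s)) (at 0)) (at 0)"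
proof -
  have "((\<lambda>s::real. z + d * of_real s) has_derivative (\<lambda>s. d * of_real s)) (at 0)"
    by (auto intro!: derivative_eq_intros)
  then have "(\<lambda>s::real. z + d * of_real s) differentiable (at 0)"
    using differentiableI by blast
  then have "(\<lambda>s::real. h (z + d * of_real s)) differentiable (at 0)"
    using differentiable_chain_at[of "\<lambda>s::real. z + d * of_real s" 0 h] assms by (simp add: o_def)
  then show ?thesis using vector_derivative_works by blast
qed

lemma dx_works:
  fixes h :: "complex \<Rightarrow> 'a::real_normed_vector"
  assumes "h differentiable (at z)"
  shows "((\<lambda>s::real. h (z + of_real s)) has_vector_derivative dx h z) (at 0)"
  using dir_works[OF assms, of 1] by (simp add: dx_def)

lemma dy_works:
  fixes h :: "complex \<Rightarrow> 'a::real_normed_vector"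
  assumes "h differentiable (at z)"
  shows "((\<lambda>s::real. h (z + \<i> * of_real s)) has_vector_derivative dy h z) (at 0)"
  using dir_works[OF assms, of "\<i>"] by (simp add: dy_def)

lemma hvd_local:
  fixes h1 h2 :: "complex \<Rightarrow> 'a::real_normed_vector"
  assumes "open D" "z \<in> D" "\<And>y. y\<in>D \<Longrightarrow> h1 y = h2 y"
    and "((\<lambda>s::real. h2 (z + d * of_real s)) has_vector_derivative v) (at 0)"
  shows "((\<lambda>s::real. h1 (z + d * of_real s)) has_vector_derivative v) (at 0)"
proof (rule has_vector_derivative_transform_within_open[OF assms(4)])
  have "continuous_on UNIV (\<lambda>s::real. z + d * of_real s)" by (intro continuous_intros)
  then show "open ((\<lambda>s::real. z + d * of_real s) -` D)"
    using assms(1) open_vimage by blast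
  show "(0::real) \<in> (\<lambda>s::real. z + d * of_real s) -` D" using assms(2) by simp
  show "\<And>y. y \<in> (\<lambda>s::real. z + d * of_real s) -` D \<Longrightarrow> h2 (z + d * of_real y) = h1 (z + d * of_real y)"
    using assms(3) by simp
qed

definition Kww :: "real \<Rightarrow> real \<Rightarrow> real \<Rightarrow> real \<Rightarrow> complex" where
  "Kww xx xy yx yy = ((of_real xx - \<i> * of_real yx)/2 - \<i> * ((of_real xy - \<i> * of_real yy)/2))/2"
definition Kwwb :: "real \<Rightarrow> real \<Rightarrow> real \<Rightarrow> real \<Rightarrow> complex" where
  "Kwwb xx xy yx yy = ((of_real xx + \<i> * of_real yx)/2 - \<i> * ((of_real xy + \<i> * of_real yy)/2))/2"
definition Kwbwb :: "real \<Rightarrow> real \<Rightarrow> real \<Rightarrow> real \<Rightarrow> complex" where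
  "Kwbwb xx xy yx yy = ((of_real xx + \<i> * of_real yx)/2 + \<i> * ((of_real xy + \<i> * of_real yy)/2))/2"

lemma second_formulas:
  fixes g X Y :: "complex \<Rightarrow> real"
  assumes D: "open D" "w \<in> D"
    and hx: "\<And>z. z\<in>D \<Longrightarrow> ((\<lambda>s::real. g (z + of_real s)) has_vector_derivative X z) (at 0)"
    and hy: "\<And>z. z\<in>D \<Longrightarrow> ((\<lambda>s::real. g (z + \<i> * of_real s)) has_vector_derivative Y z) (at 0)"
    and Xx: "((\<lambda>s::real. X (w + of_real s)) has_vector_derivative xx) (at 0)"
    and Xy: "((\<lambda>s::real. X (w + \<i> * of_real s)) has_vector_derivative xy) (at 0)"
    and Yx: "((\<lambda>s::real. Y (w + of_real s)) has_vector_derivative yx) (at 0)"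
    and Yy: "((\<lambda>s::real. Y (w + \<i> * of_real s)) has_vector_derivative yy) (at 0)"
  shows "f_ww g w = Kww xx xy yx yy \<and> f_wwb g w = Kwwb xx xy yx yy \<and> f_wbwb g w = Kwbwb xx xy yx yy"
proof -
  let ?G = "\<lambda>z. complex_of_real (g z)"
  have gx: "dx ?G z = of_real (X z)" if "z\<in>D" for z
    unfolding dx_def by (rule vector_derivative_at, rule has_vector_derivative_of_real)
       (use hx[OF that] has_real_derivative_iff_has_vector_derivative in blast)
  have gy: "dy ?G z = of_real (Y z)" if "z\<in>D" for z
    unfolding dy_def by (rule vector_derivative_at, rule has_vector_derivative_of_real)
       (use hy[OF that] has_real_derivative_iff_has_vector_derivative in blast)
  have X': "((\<lambda>s::real. complex_of_real (X (w + d * of_real s))) has_vector_derivative of_real xv) (at 0)"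
    if "((\<lambda>s::real. X (w + d * of_real s)) has_vector_derivative xv) (at 0)" for d xv
    by (rule has_vector_derivative_of_real) (use that has_real_derivative_iff_has_vector_derivative in blast)
  have Y': "((\<lambda>s::real. complex_of_real (Y (w + d * of_real s))) has_vector_derivative of_real xv) (at 0)"
    if "((\<lambda>s::real. Y (w + d * of_real s)) has_vector_derivative xv) (at 0)" for d xv
    by (rule has_vector_derivative_of_real) (use that has_real_derivative_iff_has_vector_derivative in blast)
  have Hd: "((\<lambda>s::real. (complex_of_real (X (w + d * of_real s)) + e * of_real (Y (w + d * of_real s)))/2)
        has_vector_derivative (of_real xv + e * of_real yv)/2) (at 0)"
    if "((\<lambda>s::real. X (w + d * of_real s)) has_vector_derivative xv) (at 0)"
       "((\<lambda>s::real. Y (w + d * of_real s)) has_vector_derivative yv) (at 0)" for d e xv yv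
    using has_vector_derivative_mult_right[of "\<lambda>s::real. (complex_of_real (X (w + d * of_real s)) + e * of_real (Y (w + d * of_real s)))"
        "of_real xv + e * of_real yv" "at 0" "1/2"]
      has_vector_derivative_add[OF X'[OF that(1)] has_vector_derivative_mult_right[OF Y'[OF that(2)], of e]]
    by (simp add: field_simps)
  have Dw1: "Dw ?G z = (of_real (X z) + (-\<i>) * of_real (Y z))/2" if "z\<in>D" for z
    using gx[OF that] gy[OF that] by (simp add: Dw_def)
  have Dwb1: "Dwb ?G z = (of_real (X z) + \<i> * of_real (Y z))/2" if "z\<in>D" for z
    using gx[OF that] gy[OF that] by (simp add: Dwb_def)
  have L: "dir (Dw ?G) w = (of_real xv + (-\<i>) * of_real yv)/2"
    if "((\<lambda>s::real. X (w + d * of_real s)) has_vector_derivative xv) (at 0)"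
       "((\<lambda>s::real. Y (w + d * of_real s)) has_vector_derivative yv) (at 0)"
       "dir = (\<lambda>h w. vector_derivative (\<lambda>s::real. h (w + d * of_real s)) (at 0))" for d xv yv dir
    unfolding that(3)
    by (rule vector_derivative_at, rule hvd_local[OF D, of _ "\<lambda>z. (of_real (X z) + (-\<i>) * of_real (Y z))/2"])
       (erule Dw1, rule Hd[OF that(1,2)])
  have Lb: "dir (Dwb ?G) w = (of_real xv + \<i> * of_real yv)/2"
    if "((\<lambda>s::real. X (w + d * of_real s)) has_vector_derivative xv) (at 0)"
       "((\<lambda>s::real. Y (w + d * of_real s)) has_vector_derivative yv) (at 0)"
       "dir = (\<lambda>h w. vector_derivative (\<lambda>s::real. h (w + d * of_real s)) (at 0))" for d xv yv dir
    unfolding that(3)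
    by (rule vector_derivative_at, rule hvd_local[OF D, of _ "\<lambda>z. (of_real (X z) + \<i> * of_real (Y z))/2"])
       (erule Dwb1, rule Hd[OF that(1,2)])
  have dxe: "dx = (\<lambda>h w. vector_derivative (\<lambda>s::real. h (w + 1 * of_real s)) (at 0))"
    by (simp add: fun_eq_iff dx_def)
  have dye: "dy = (\<lambda>h w. vector_derivative (\<lambda>s::real. h (w + \<i> * of_real s)) (at 0))"
    by (simp add: fun_eq_iff dy_def)
  have Xx1: "((\<lambda>s::real. X (w + 1 * of_real s)) has_vector_derivative xx) (at 0)" using Xx by simp
  have Yx1: "((\<lambda>s::real. Y (w + 1 * of_real s)) has_vector_derivative yx) (at 0)" using Yx by simp
  note a = L[OF Xx1 Yx1 dxe] L[OF Xy Yy dye] Lb[OF Xx1 Yx1 dxe] Lb[OF Xy Yy dye]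
  have e1: "f_ww g w = Kww xx xy yx yy"
    unfolding f_ww_def Dw_def[of "Dw ?G" w] a by (simp add: Kww_def algebra_simps)
  have e2: "f_wwb g w = Kwwb xx xy yx yy"
    unfolding f_wwb_def Dw_def[of "Dwb ?G" w] a by (simp add: Kwwb_def algebra_simps)
  have e3: "f_wbwb g w = Kwbwb xx xy yx yy"
    unfolding f_wbwb_def Dwb_def[of "Dwb ?G" w] a by (simp add: Kwbwb_def algebra_simps)
  show ?thesis using e1 e2 e3 by blast
qed



lemma poly_shift_decomp:
  fixes p :: "'a::comm_ring_1 poly"
  assumes "\<forall>i<k. coeff p i = 0"
  shows "p = monom 1 k * poly_shift k p"
  by (rule poly_eqI) (use assms in \<open>auto simp: coeff_monom_mult coeff_poly_shift not_less\<close>)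

lemma polyO:
  fixes p :: "complex poly"
  shows "((\<lambda>t::real. poly p (of_real t) / of_real t ^ k) \<longlongrightarrow> 0) (at 0) \<longleftrightarrow> (\<forall>i\<le>k. coeff p i = 0)"
proof
  assume h: "\<forall>i\<le>k. coeff p i = 0"
  define q where "q = poly_shift (Suc k) p"
  have pq: "p = monom 1 (Suc k) * q" unfolding q_def by (rule poly_shift_decomp) (use h in auto)
  have ev: "eventually (\<lambda>t::real. of_real t * poly q (of_real t) = poly p (of_real t) / of_real t ^ k) (at 0)"
    unfolding eventually_at_filter by (auto simp: pq poly_monom field_simps)
  have "((\<lambda>t::real. of_real t * poly q (of_real t)) \<longlongrightarrow> of_real 0 * poly q (of_real 0)) (at 0)"
    by (intro tendsto_intros)
  then show "((\<lambda>t::real. poly p (of_real t) / of_real t ^ k) \<longlongrightarrow> 0) (at 0)"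
    using Lim_transform_eventually ev by fastforce
next
  assume "((\<lambda>t::real. poly p (of_real t) / of_real t ^ k) \<longlongrightarrow> 0) (at 0)"
  then show "\<forall>i\<le>k. coeff p i = 0"
  proof (induction k)
    case 0
    have "((\<lambda>t::real. poly p (of_real t)) \<longlongrightarrow> poly p (of_real 0)) (at 0)"
      by (intro tendsto_intros)
    moreover have "((\<lambda>t::real. poly p (of_real t)) \<longlongrightarrow> 0) (at 0)" using 0 by simp
    ultimately have "poly p 0 = 0" using tendsto_unique[OF at_neq_bot] by fastforce
    then show ?case by (simp add: poly_0_coeff_0)
  next
    case (Suc k)
    have ev: "eventually (\<lambda>t::real. poly p (of_real t) / of_real t ^ Suc k * of_real t = poly p (of_real t) / of_real t ^ k) (at 0)"
      unfolding eventually_at_filter by (auto simp: field_simps)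
    have "((\<lambda>t::real. poly p (of_real t) / of_real t ^ Suc k * of_real t) \<longlongrightarrow> 0 * of_real 0) (at 0)"
      by (intro tendsto_intros Suc.prems)
    then have "((\<lambda>t::real. poly p (of_real t) / of_real t ^ k) \<longlongrightarrow> 0) (at 0)"
      using Lim_transform_eventually ev by fastforce
    then have IH: "\<forall>i\<le>k. coeff p i = 0" by (rule Suc.IH)
    define q where "q = poly_shift (Suc k) p"
    have pq: "p = monom 1 (Suc k) * q" unfolding q_def by (rule poly_shift_decomp) (use IH in auto)
    have ev2: "eventually (\<lambda>t::real. poly p (of_real t) / of_real t ^ Suc k = poly q (of_real t)) (at 0)"
      unfolding eventually_at_filter by (auto simp: pq poly_monom field_simps)
    have "((\<lambda>t::real. poly q (of_real t)) \<longlongrightarrow> 0) (at 0)"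
      using Lim_transform_eventually[OF Suc.prems ev2] .
    moreover have "((\<lambda>t::real. poly q (of_real t)) \<longlongrightarrow> poly q (of_real 0)) (at 0)"
      by (intro tendsto_intros)
    ultimately have "poly q 0 = 0" using tendsto_unique[OF at_neq_bot] by fastforce
    then have "coeff p (Suc k) = 0" by (simp add: pq coeff_monom_mult poly_0_coeff_0)
    then show ?case using IH le_Suc_eq by auto
  qed
qed

definition EQ :: "(nat \<Rightarrow> complex) \<Rightarrow> (nat \<Rightarrow> complex) \<Rightarrow> nat \<Rightarrow> bool" where
  "EQ a c k \<longleftrightarrow> (\<Sum>i\<le>k. c (Suc i) / fact (Suc i) * (c (Suc (k - i)) / fact (Suc (k - i))))
      = (\<Sum>i\<le>k. a i / fact i * (cnj (a (k - i)) / fact (k - i)))"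

lemma AL1:
  fixes a c :: "nat \<Rightarrow> complex" and n :: nat
  assumes a0: "a 0 \<noteq> 0"
  defines "P \<equiv> \<lambda>t::real. \<Sum>m\<le>n. complex_of_real (t^m/fact m) * a m"
    and "T \<equiv> \<lambda>t::real. \<Sum>m\<le>n. complex_of_real (t^m/fact m) * c m"
  shows "((\<lambda>t. T t - of_real t * of_real (cmod (P t))) \<in> o[at 0](\<lambda>t::real. (of_real t::complex)^n))
     \<longleftrightarrow> (c 0 = 0 \<and> (0 < n \<longrightarrow> c 1 = of_real (cmod (a 0)) \<and> (\<forall>k<n. EQ a c k)))"
proof -
  define pA where "pA = (\<Sum>m\<le>n. monom (a m / fact m) m)"
  define pB where "pB = (\<Sum>m\<le>n. monom (cnj (a m) / fact m) m)"
  define pE where "pE = (\<Sum>m<n. monom (c (Suc m) / fact (Suc m)) m)"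
  define Q where "Q = pE * pE - pA * pB"
  define \<sigma> where "\<sigma> = (\<lambda>t::real. poly pE (of_real t))"
  define S where "S = (\<lambda>t::real. complex_of_real (cmod (P t)))"
  define f where "f = (\<lambda>t. T t - of_real t * S t)"
  have PA: "P t = poly pA (of_real t)" for t
    unfolding P_def pA_def by (simp add: poly_sum poly_monom field_simps)
  have PB: "cnj (P t) = poly pB (of_real t)" for t
    unfolding P_def pB_def by (simp add: poly_sum poly_monom field_simps)
  have cA: "coeff pA i = (if i \<le> n then a i / fact i else 0)" for i
    unfolding pA_def by (simp add: coeff_sum coeff_monom)
  have cB: "coeff pB i = (if i \<le> n then cnj (a i) / fact i else 0)" for i
    unfolding pB_def by (simp add: coeff_sum coeff_monom)
  have cE: "coeff pE i = (if i < n then c (Suc i) / fact (Suc i) else 0)" for i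
    unfolding pE_def by (simp add: coeff_sum coeff_monom)
  have Tsig: "T t = c 0 + of_real t * \<sigma> t" for t
  proof (cases n)
    case 0
    then show ?thesis by (simp add: T_def \<sigma>_def pE_def)
  next
    case (Suc k)
    have "T t = c 0 + (\<Sum>m\<le>k. complex_of_real (t^Suc m/fact (Suc m)) * c (Suc m))"
      unfolding T_def Suc by (subst sum.atMost_shift, simp only: power_0 fact_0 div_by_1 of_real_1 mult_1 lessThan_Suc_atMost)
    also have "(\<Sum>m\<le>k. complex_of_real (t^Suc m/fact (Suc m)) * c (Suc m)) = of_real t * \<sigma> t"
      unfolding \<sigma>_def pE_def Suc lessThan_Suc_atMost
      by (simp add: poly_sum poly_monom sum_distrib_left field_simps)
    finally show ?thesis .
  qed
  have Sq: "S t ^ 2 = poly pA (of_real t) * poly pB (of_real t)" for t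
    unfolding S_def PA[symmetric] PB[symmetric] by (metis complex_norm_square of_real_power)
  have pQ: "poly Q (of_real t) = (\<sigma> t - S t) * (\<sigma> t + S t)" for t
    unfolding Q_def \<sigma>_def using Sq[of t] by (simp add: algebra_simps power2_eq_square)
  have cQ: "coeff Q k = 0 \<longleftrightarrow> EQ a c k" if "k < n" for k
  proof -
    have "coeff Q k = (\<Sum>i\<le>k. c (Suc i) / fact (Suc i) * (c (Suc (k - i)) / fact (Suc (k - i))))
      - (\<Sum>i\<le>k. a i / fact i * (cnj (a (k - i)) / fact (k - i)))"
      unfolding Q_def coeff_diff coeff_mult using that
      by (intro arg_cong2[where f="(-)"] sum.cong) (auto simp: cA cB cE Suc_diff_le)
    then show ?thesis unfolding EQ_def by simp
  qed
  have fsig: "f t = c 0 + of_real t * (\<sigma> t - S t)" for t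
    unfolding f_def Tsig by (simp add: algebra_simps)
  have \<sigma>lim: "(\<sigma> \<longlongrightarrow> (if 0 < n then c 1 else 0)) (at 0)"
  proof -
    have "(\<sigma> \<longlongrightarrow> poly pE (of_real 0)) (at 0)" unfolding \<sigma>_def by (intro tendsto_intros)
    then show ?thesis by (simp add: poly_0_coeff_0 cE split: if_splits)
  qed
  have Slim: "(S \<longlongrightarrow> of_real (cmod (a 0))) (at 0)"
  proof -
    have "(S \<longlongrightarrow> of_real (cmod (poly pA (of_real 0)))) (at 0)" unfolding S_def PA by (intro tendsto_intros)
    then show ?thesis by (simp add: poly_0_coeff_0 cA)
  qed
  have flim: "(f \<longlongrightarrow> c 0) (at 0)"
  proof -
    have "(f \<longlongrightarrow> c 0 + of_real 0 * ((if 0 < n then c 1 else 0) - of_real (cmod (a 0)))) (at 0)"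
      unfolding fsig by (intro tendsto_intros \<sigma>lim Slim)
    then show ?thesis by simp
  qed
  have nz: "eventually (\<lambda>t::real. (of_real t::complex) ^ n \<noteq> 0) (at 0)"
    unfolding eventually_at_filter by simp
  have LHS: "((\<lambda>t. T t - of_real t * of_real (cmod (P t))) \<in> o[at 0](\<lambda>t::real. (of_real t::complex)^n))
     \<longleftrightarrow> ((\<lambda>t. f t / of_real t ^ n) \<longlongrightarrow> 0) (at 0)"
    unfolding f_def S_def by (rule iffI, erule smalloD_tendsto, erule smalloI_tendsto[OF _ nz])
  show ?thesis unfolding LHS
  proof
    assume h: "((\<lambda>t. f t / of_real t ^ n) \<longlongrightarrow> 0) (at 0)"
    have ev: "eventually (\<lambda>t::real. f t / of_real t ^ n * of_real t ^ n = f t) (at 0)"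
      unfolding eventually_at_filter by simp
    have "((\<lambda>t::real. f t / of_real t ^ n * of_real t ^ n) \<longlongrightarrow> 0 * of_real 0 ^ n) (at 0)"
      by (intro tendsto_intros h)
    then have "(f \<longlongrightarrow> 0) (at 0)" using Lim_transform_eventually[OF _ ev] by simp
    then have c0: "c 0 = 0" using tendsto_unique[OF at_neq_bot flim] by simp
    show "c 0 = 0 \<and> (0 < n \<longrightarrow> c 1 = of_real (cmod (a 0)) \<and> (\<forall>k<n. EQ a c k))"
    proof (cases n)
      case 0
      then show ?thesis using c0 by simp
    next
      case (Suc k)
      have ev1: "eventually (\<lambda>t::real. f t / of_real t ^ n = (\<sigma> t - S t) / of_real t ^ k) (at 0)"
        unfolding eventually_at_filter by (simp add: fsig c0 Suc)
      have h1: "((\<lambda>t. (\<sigma> t - S t) / of_real t ^ k) \<longlongrightarrow> 0) (at 0)"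
        using Lim_transform_eventually[OF h ev1] .
      have ev2: "eventually (\<lambda>t::real. (\<sigma> t - S t) / of_real t ^ k * of_real t ^ k = \<sigma> t - S t) (at 0)"
        unfolding eventually_at_filter by simp
      have "((\<lambda>t::real. (\<sigma> t - S t) / of_real t ^ k * of_real t ^ k) \<longlongrightarrow> 0 * of_real 0 ^ k) (at 0)"
        by (intro tendsto_intros h1)
      then have "((\<lambda>t. \<sigma> t - S t) \<longlongrightarrow> 0) (at 0)" using Lim_transform_eventually[OF _ ev2] by simp
      moreover have "((\<lambda>t. \<sigma> t - S t) \<longlongrightarrow> c 1 - of_real (cmod (a 0))) (at 0)"
        using tendsto_diff[OF \<sigma>lim Slim] Suc by simp
      ultimately have c1: "c 1 = of_real (cmod (a 0))" using tendsto_unique[OF at_neq_bot] by fastforce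
      have ev3: "eventually (\<lambda>t::real. (\<sigma> t - S t) / of_real t ^ k * (\<sigma> t + S t) = poly Q (of_real t) / of_real t ^ k) (at 0)"
        unfolding eventually_at_filter by (simp add: pQ)
      have "((\<lambda>t::real. (\<sigma> t - S t) / of_real t ^ k * (\<sigma> t + S t)) \<longlongrightarrow> 0 * (c 1 + of_real (cmod (a 0)))) (at 0)"
        using tendsto_mult[OF h1 tendsto_add[OF \<sigma>lim Slim]] Suc by simp
      then have "((\<lambda>t::real. poly Q (of_real t) / of_real t ^ k) \<longlongrightarrow> 0) (at 0)"
        using Lim_transform_eventually[OF _ ev3] by simp
      then have "\<forall>i\<le>k. coeff Q i = 0" using polyO by blast
      then have "\<forall>i<n. EQ a c i" using cQ Suc by auto
      then show ?thesis using c0 c1 by simp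
    qed
  next
    assume K: "c 0 = 0 \<and> (0 < n \<longrightarrow> c 1 = of_real (cmod (a 0)) \<and> (\<forall>k<n. EQ a c k))"
    show "((\<lambda>t. f t / of_real t ^ n) \<longlongrightarrow> 0) (at 0)"
    proof (cases n)
      case 0
      then show ?thesis using flim K by simp
    next
      case (Suc k)
      have "\<forall>i\<le>k. coeff Q i = 0" using cQ K Suc by auto
      then have hQ: "((\<lambda>t::real. poly Q (of_real t) / of_real t ^ k) \<longlongrightarrow> 0) (at 0)" using polyO by blast
      have a0': "cmod (a 0) \<noteq> 0" using a0 by simp
      have sum_lim: "((\<lambda>t. \<sigma> t + S t) \<longlongrightarrow> 2 * of_real (cmod (a 0))) (at 0)"
        using tendsto_add[OF \<sigma>lim Slim] Suc K by simp
      then have evnz: "eventually (\<lambda>t. \<sigma> t + S t \<noteq> 0) (at 0)"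
        by (rule tendsto_imp_eventually_ne) (use a0' in simp)
      have "((\<lambda>t::real. poly Q (of_real t) / of_real t ^ k / (\<sigma> t + S t)) \<longlongrightarrow> 0 / (2 * of_real (cmod (a 0)))) (at 0)"
        by (rule tendsto_divide[OF hQ sum_lim]) (use a0' in simp)
      moreover have "eventually (\<lambda>t::real. poly Q (of_real t) / of_real t ^ k / (\<sigma> t + S t) = f t / of_real t ^ n) (at 0)"
        using evnz unfolding eventually_at_filter
        by eventually_elim (auto simp: pQ fsig K Suc)
      ultimately show ?thesis using Lim_transform_eventually by fastforce
    qed
  qed
qed



lemma form_alg:
  fixes X S1 S2 \<alpha> :: complex and m :: nat
  assumes "\<alpha> \<noteq> 0"
  shows "(X = (of_nat m * S1 - (1 / of_nat (m + 1)) * S2) / (2 * \<alpha>))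
     \<longleftrightarrow> (2 * (of_nat m + 1) * \<alpha> * X + S2 = (of_nat m + 1) * of_nat m * S1)"
proof -
  have "(of_nat m + 1 :: complex) = of_nat (m+1)" by simp
  also have "\<dots> \<noteq> 0" by (simp only: of_nat_eq_0_iff)
  finally have m1: "(of_nat m + 1 :: complex) \<noteq> 0" .
  define Y where "Y = of_nat m * S1 - (1 / of_nat (m + 1)) * S2"
  define M1 where "M1 = (of_nat m + 1 :: complex)"
  have M1z: "M1 \<noteq> 0" using m1 unfolding M1_def .
  have e1: "X = Y / (2 * \<alpha>) \<longleftrightarrow> X * (2 * \<alpha>) = Y" using assms by (simp add: eq_divide_eq)
  have e2: "X * (2 * \<alpha>) = Y \<longleftrightarrow> M1 * (X * (2 * \<alpha>)) = M1 * Y" using M1z by simp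
  have e3: "M1 * Y = M1 * of_nat m * S1 - S2" unfolding Y_def M1_def using m1
    by (simp add: algebra_simps) (simp add: field_simps)
  have e4: "M1 * (X * (2 * \<alpha>)) = M1 * of_nat m * S1 - S2 \<longleftrightarrow> 2 * M1 * \<alpha> * X + S2 = M1 * of_nat m * S1"
    by (auto simp: algebra_simps)
  have fin: "X = Y / (2 * \<alpha>) \<longleftrightarrow> 2 * M1 * \<alpha> * X + S2 = M1 * of_nat m * S1"
    unfolding e1 e2 e3 e4 ..
  then show ?thesis unfolding Y_def M1_def .
qed

lemma Fm:
  fixes a c :: "nat \<Rightarrow> complex" and k :: nat
  assumes al: "\<alpha> \<noteq> 0" and c1: "c 1 = \<alpha>" and k1: "1 \<le> k"
  defines "m \<equiv> Suc k"
  shows "(c m = (of_nat m * (\<Sum>r<m. of_nat ((m - 1) choose r) * a r * cnj (a (m - r - 1)))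
         - (1 / of_nat (m + 1)) *
           (\<Sum>r\<in>{2..<m}. of_nat ((m + 1) choose r) * c r * c (m - r + 1)))
        / (2 * \<alpha>)) \<longleftrightarrow> EQ a c k"
proof -
  define S1 where "S1 = (\<Sum>r<m. of_nat ((m - 1) choose r) * a r * cnj (a (m - r - 1)))"
  define S2 where "S2 = (\<Sum>r\<in>{2..<m}. of_nat ((m + 1) choose r) * c r * c (m - r + 1))"
  define LE where "LE = (\<Sum>i\<le>k. c (Suc i) / fact (Suc i) * (c (Suc (k - i)) / fact (Suc (k - i))))"
  define RE where "RE = (\<Sum>i\<le>k. a i / fact i * (cnj (a (k - i)) / fact (k - i)))"
  have EQe: "EQ a c k \<longleftrightarrow> LE = RE" unfolding EQ_def LE_def RE_def ..
  have hS1: "S1 = fact k * RE"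
    unfolding S1_def RE_def m_def lessThan_Suc_atMost sum_distrib_left
  proof (rule sum.cong)
    fix r assume "r \<in> {..k}"
    then have r: "r \<le> k" by simp
    show "of_nat ((Suc k - 1) choose r) * a r * cnj (a (Suc k - r - 1)) =
          fact k * (a r / fact r * (cnj (a (k - r)) / fact (k - r)))"
      using r by (simp add: binomial_fact field_simps)
  qed simp
  have hL: "fact (m + 1) * LE = (\<Sum>i\<le>k. of_nat ((m + 1) choose (Suc i)) * c (Suc i) * c (m - i))"
    unfolding LE_def sum_distrib_left
  proof (rule sum.cong)
    fix i assume "i \<in> {..k}"
    then have i: "i \<le> k" by simp
    have e: "Suc (k - i) = m - i" "m + 1 - Suc i = m - i" using i by (auto simp: m_def)
    show "fact (m + 1) * (c (Suc i) / fact (Suc i) * (c (Suc (k - i)) / fact (Suc (k - i)))) =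
          of_nat ((m + 1) choose (Suc i)) * c (Suc i) * c (m - i)"
      using i unfolding e by (subst binomial_fact) (auto simp: m_def field_simps)
  qed simp
  define g where "g = (\<lambda>j. of_nat ((m + 1) choose j) * c j * c (m + 1 - j) :: complex)"
  have "(\<Sum>i\<le>k. of_nat ((m + 1) choose (Suc i)) * c (Suc i) * c (m - i)) = (\<Sum>i\<in>{0..k}. g (Suc i))"
    unfolding g_def atMost_atLeast0 by simp
  also have "\<dots> = (\<Sum>j\<in>{Suc 0..Suc k}. g j)" by (rule sum.shift_bounds_cl_Suc_ivl[symmetric])
  also have "{Suc 0..Suc k} = insert 1 (insert m {2..<m})" using k1 by (auto simp: m_def)
  also have "(\<Sum>j\<in>insert 1 (insert m {2..<m}). g j) = g 1 + g m + (\<Sum>j\<in>{2..<m}. g j)"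
    using k1 by (simp add: m_def)
  also have "(\<Sum>j\<in>{2..<m}. g j) = S2" unfolding S2_def g_def
    by (rule sum.cong) (auto simp: m_def Suc_diff_le)
  also have "g 1 + g m = 2 * (of_nat m + 1) * \<alpha> * c m"
    unfolding g_def using c1 by (simp add: m_def algebra_simps)
  finally have hL2: "fact (m + 1) * LE = 2 * (of_nat m + 1) * \<alpha> * c m + S2" using hL by simp
  have fm: "fact (m + 1) = (of_nat m + 1) * of_nat m * (fact k :: complex)"
    by (simp add: m_def algebra_simps)
  have "LE = RE \<longleftrightarrow> fact (m + 1) * LE = fact (m + 1) * RE"
    using fact_nonzero[of "m+1", where 'a=complex] by (metis mult_cancel_left)
  also have "\<dots> \<longleftrightarrow> 2 * (of_nat m + 1) * \<alpha> * c m + S2 = (of_nat m + 1) * of_nat m * S1"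
  proof -
    have "fact (m + 1) * RE = (of_nat m + 1) * of_nat m * S1" by (simp only: fm hS1 mult.assoc)
    then show ?thesis unfolding hL2 by simp
  qed
  finally show ?thesis unfolding EQe using form_alg[OF al, of "c m" m S1 S2]
    unfolding S1_def S2_def by simp
qed

lemma AL2:
  fixes a c :: "nat \<Rightarrow> complex" and n :: nat
  assumes a0: "a 0 \<noteq> 0"
  defines "P \<equiv> \<lambda>m. c m =
        (of_nat m * (\<Sum>r<m. of_nat ((m - 1) choose r) * a r * cnj (a (m - r - 1)))
         - (1 / of_nat (m + 1)) *
           (\<Sum>r\<in>{2..<m}. of_nat ((m + 1) choose r) * c r * c (m - r + 1)))
        / (2 ^ (1 - (if m = 1 then 1 else 0)) * csqrt (a 0 * cnj (a 0)))"
  shows "(\<forall>m\<le>n. P m) \<longleftrightarrow> (c 0 = 0 \<and> (0 < n \<longrightarrow> c 1 = of_real (cmod (a 0)) \<and> (\<forall>k<n. EQ a c k)))"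
proof -
  define \<alpha> where "\<alpha> = complex_of_real (cmod (a 0))"
  have al: "\<alpha> \<noteq> 0" using a0 unfolding \<alpha>_def by simp
  have aa: "a 0 * cnj (a 0) = \<alpha> ^ 2" unfolding \<alpha>_def
    by (metis complex_norm_square of_real_power)
  have cs: "csqrt (a 0 * cnj (a 0)) = \<alpha>"
  proof -
    have "a 0 * cnj (a 0) = of_real ((cmod (a 0))^2)" by (simp only: complex_norm_square)
    then show ?thesis unfolding \<alpha>_def by simp
  qed
  have P0: "P 0 \<longleftrightarrow> c 0 = 0" unfolding P_def by simp
  have P1: "P 1 \<longleftrightarrow> c 1 = \<alpha>" unfolding P_def cs using al by (simp add: aa power2_eq_square)
  have Pm: "P m \<longleftrightarrow> EQ a c (m - 1)" if "2 \<le> m" "c 1 = \<alpha>" for m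
  proof -
    define k where "k = m - 1"
    have k: "m = Suc k" "1 \<le> k" using that(1) unfolding k_def by auto
    have "2 ^ (1 - (if m = 1 then 1 else 0)) * csqrt (a 0 * cnj (a 0)) = 2 * \<alpha>"
      using that(1) cs by simp
    then show ?thesis unfolding P_def using Fm[where \<alpha>=\<alpha> and c=c and k=k and a=a, OF al that(2) k(2)] k(1) by simp
  qed
  have E0: "EQ a c 0" if "c 1 = \<alpha>" unfolding EQ_def using that aa by (simp add: power2_eq_square)
  show ?thesis
  proof
    assume h: "\<forall>m\<le>n. P m"
    have c0: "c 0 = 0" using h P0 by auto
    show "c 0 = 0 \<and> (0 < n \<longrightarrow> c 1 = of_real (cmod (a 0)) \<and> (\<forall>k<n. EQ a c k))"
    proof (intro conjI impI allI c0)
      assume n: "0 < n"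
      then have c1: "c 1 = \<alpha>" using h P1 by auto
      then show "c 1 = of_real (cmod (a 0))" unfolding \<alpha>_def .
      show "EQ a c k" if "k < n" for k
      proof (cases k)
        case 0 then show ?thesis using E0 c1 by simp
      next
        case (Suc j)
        have "P (Suc k)" using h that by auto
        then show ?thesis using Pm[of "Suc k"] Suc c1 by simp
      qed
    qed
  next
    assume K: "c 0 = 0 \<and> (0 < n \<longrightarrow> c 1 = of_real (cmod (a 0)) \<and> (\<forall>k<n. EQ a c k))"
    show "\<forall>m\<le>n. P m"
    proof (intro allI impI)
      fix m assume m: "m \<le> n"
      consider "m = 0" | "m = 1" | "2 \<le> m" by linarith
      then show "P m"
      proof cases
        case 1 then show ?thesis using K P0 by simp
      next
        case 2 then show ?thesis using K P1 m unfolding \<alpha>_def by simp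
      next
        case 3
        then have c1: "c 1 = \<alpha>" using K m unfolding \<alpha>_def by simp
        have "EQ a c (m - 1)" using K m 3 by simp
        then show ?thesis using Pm[OF 3 c1] by simp
      qed
    qed
  qed
qed


lemma Kww_sum:
  "Kww (\<Sum>m\<in>I. r m * x1 m) (\<Sum>m\<in>I. r m * x2 m) (\<Sum>m\<in>I. r m * x3 m) (\<Sum>m\<in>I. r m * x4 m)
   = (\<Sum>m\<in>I. of_real (r m) * Kww (x1 m) (x2 m) (x3 m) (x4 m))"
proof -
  have lin: "Kww y1 y2 y3 y4 = of_real y1 * (1/4) + of_real y2 * (-\<i>/4) + of_real y3 * (-\<i>/4) + of_real y4 * (-1/4)" for y1 y2 y3 y4
    by (simp add: Kww_def field_simps)
  show ?thesis unfolding lin of_real_sum sum_distrib_right sum.distrib[symmetric]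
    by (rule sum.cong) (simp_all add: algebra_simps)
qed

lemma Kwwb_sum:
  "Kwwb (\<Sum>m\<in>I. r m * x1 m) (\<Sum>m\<in>I. r m * x2 m) (\<Sum>m\<in>I. r m * x3 m) (\<Sum>m\<in>I. r m * x4 m)
   = (\<Sum>m\<in>I. of_real (r m) * Kwwb (x1 m) (x2 m) (x3 m) (x4 m))"
proof -
  have lin: "Kwwb y1 y2 y3 y4 = of_real y1 * (1/4) + of_real y2 * (-\<i>/4) + of_real y3 * (\<i>/4) + of_real y4 * (1/4)" for y1 y2 y3 y4
    by (simp add: Kwwb_def field_simps)
  show ?thesis unfolding lin of_real_sum sum_distrib_right sum.distrib[symmetric]
    by (rule sum.cong) (simp_all add: algebra_simps)
qed

lemma Kwbwb_sum:
  "Kwbwb (\<Sum>m\<in>I. r m * x1 m) (\<Sum>m\<in>I. r m * x2 m) (\<Sum>m\<in>I. r m * x3 m) (\<Sum>m\<in>I. r m * x4 m)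
   = (\<Sum>m\<in>I. of_real (r m) * Kwbwb (x1 m) (x2 m) (x3 m) (x4 m))"
proof -
  have lin: "Kwbwb y1 y2 y3 y4 = of_real y1 * (1/4) + of_real y2 * (\<i>/4) + of_real y3 * (\<i>/4) + of_real y4 * (-1/4)" for y1 y2 y3 y4
    by (simp add: Kwbwb_def field_simps)
  show ?thesis unfolding lin of_real_sum sum_distrib_right sum.distrib[symmetric]
    by (rule sum.cong) (simp_all add: algebra_simps)
qed

lemma Kwbwb_cnj: "Kwbwb x1 x2 x3 x4 = cnj (Kww x1 x2 x3 x4)"
  by (simp add: Kww_def Kwbwb_def complex_eq_iff)

lemma C2_formulas:
  assumes "open D" "w \<in> D" "C2_on D g"
  shows "f_ww g w = Kww (dx (dx g) w) (dy (dx g) w) (dx (dy g) w) (dy (dy g) w) \<and>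
         f_wwb g w = Kwwb (dx (dx g) w) (dy (dx g) w) (dx (dy g) w) (dy (dy g) w) \<and>
         f_wbwb g w = Kwbwb (dx (dx g) w) (dy (dx g) w) (dx (dy g) w) (dy (dy g) w)"
  using assms(3) unfolding C2_on_def
  by (intro second_formulas[OF assms(1,2)]) (auto intro!: dx_works dy_works simp: assms(2))

lemma lin_formulas:
  fixes g :: "nat \<Rightarrow> complex \<Rightarrow> real" and r :: "nat \<Rightarrow> real"
  assumes oD: "open D" and w: "w \<in> D" and C2: "\<And>m. m \<in> I \<Longrightarrow> C2_on D (g m)"
  shows "f_ww (\<lambda>z. \<Sum>m\<in>I. r m * g m z) w = (\<Sum>m\<in>I. of_real (r m) * f_ww (g m) w) \<and>
         f_wwb (\<lambda>z. \<Sum>m\<in>I. r m * g m z) w = (\<Sum>m\<in>I. of_real (r m) * f_wwb (g m) w) \<and>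
         f_wbwb (\<lambda>z. \<Sum>m\<in>I. r m * g m z) w = (\<Sum>m\<in>I. of_real (r m) * f_wbwb (g m) w)"
proof -
  have lc: "((\<lambda>s::real. \<Sum>m\<in>I. r m * h m (z + d * of_real s)) has_vector_derivative
       (\<Sum>m\<in>I. r m * dir h m)) (at 0)"
    if "\<And>m. m \<in> I \<Longrightarrow> ((\<lambda>s::real. h m (z + d * of_real s)) has_vector_derivative dir h m) (at 0)"
    for h :: "nat \<Rightarrow> complex \<Rightarrow> real" and z d dir
    by (intro has_vector_derivative_sum has_vector_derivative_mult_right that)
  have dxw: "((\<lambda>s::real. h (z + 1 * of_real s)) has_vector_derivative dx h z) (at 0)"
    if "h differentiable (at z)" for h :: "complex \<Rightarrow> real" and z
    using dx_works[OF that] by simp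
  have dyw: "((\<lambda>s::real. h (z + \<i> * of_real s)) has_vector_derivative dy h z) (at 0)"
    if "h differentiable (at z)" for h :: "complex \<Rightarrow> real" and z
    using dy_works[OF that] by simp
  have C2D: "g m differentiable (at z)" "dx (g m) differentiable (at z)" "dy (g m) differentiable (at z)"
    if "m \<in> I" "z \<in> D" for m z
    using C2[OF that(1)] that(2) unfolding C2_on_def by auto
  have sf: "f_ww (\<lambda>z. \<Sum>m\<in>I. r m * g m z) w = Kww (\<Sum>m\<in>I. r m * dx (dx (g m)) w) (\<Sum>m\<in>I. r m * dy (dx (g m)) w)
               (\<Sum>m\<in>I. r m * dx (dy (g m)) w) (\<Sum>m\<in>I. r m * dy (dy (g m)) w) \<and>
            f_wwb (\<lambda>z. \<Sum>m\<in>I. r m * g m z) w = Kwwb (\<Sum>m\<in>I. r m * dx (dx (g m)) w) (\<Sum>m\<in>I. r m * dy (dx (g m)) w)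
               (\<Sum>m\<in>I. r m * dx (dy (g m)) w) (\<Sum>m\<in>I. r m * dy (dy (g m)) w) \<and>
            f_wbwb (\<lambda>z. \<Sum>m\<in>I. r m * g m z) w = Kwbwb (\<Sum>m\<in>I. r m * dx (dx (g m)) w) (\<Sum>m\<in>I. r m * dy (dx (g m)) w)
               (\<Sum>m\<in>I. r m * dx (dy (g m)) w) (\<Sum>m\<in>I. r m * dy (dy (g m)) w)"
  proof (rule second_formulas[OF oD w, where X="\<lambda>z. \<Sum>m\<in>I. r m * dx (g m) z" and Y="\<lambda>z. \<Sum>m\<in>I. r m * dy (g m) z"])
    fix z assume z: "z \<in> D"
    show "((\<lambda>s::real. \<Sum>m\<in>I. r m * g m (z + of_real s)) has_vector_derivative (\<Sum>m\<in>I. r m * dx (g m) z)) (at 0)"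
      using lc[of g z 1 "\<lambda>h m. dx (h m) z"] dxw C2D(1)[OF _ z] by simp
    show "((\<lambda>s::real. \<Sum>m\<in>I. r m * g m (z + \<i> * of_real s)) has_vector_derivative (\<Sum>m\<in>I. r m * dy (g m) z)) (at 0)"
      using lc[of g z \<i> "\<lambda>h m. dy (h m) z"] dyw C2D(1)[OF _ z] by simp
  next
    show "((\<lambda>s::real. \<Sum>m\<in>I. r m * dx (g m) (w + of_real s)) has_vector_derivative (\<Sum>m\<in>I. r m * dx (dx (g m)) w)) (at 0)"
      using lc[of "\<lambda>m. dx (g m)" w 1 "\<lambda>h m. dx (h m) w"] dxw C2D(2)[OF _ w] by simp
    show "((\<lambda>s::real. \<Sum>m\<in>I. r m * dx (g m) (w + \<i> * of_real s)) has_vector_derivative (\<Sum>m\<in>I. r m * dy (dx (g m)) w)) (at 0)"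
      using lc[of "\<lambda>m. dx (g m)" w \<i> "\<lambda>h m. dy (h m) w"] dyw C2D(2)[OF _ w] by simp
    show "((\<lambda>s::real. \<Sum>m\<in>I. r m * dy (g m) (w + of_real s)) has_vector_derivative (\<Sum>m\<in>I. r m * dx (dy (g m)) w)) (at 0)"
      using lc[of "\<lambda>m. dy (g m)" w 1 "\<lambda>h m. dx (h m) w"] dxw C2D(3)[OF _ w] by simp
    show "((\<lambda>s::real. \<Sum>m\<in>I. r m * dy (g m) (w + \<i> * of_real s)) has_vector_derivative (\<Sum>m\<in>I. r m * dy (dy (g m)) w)) (at 0)"
      using lc[of "\<lambda>m. dy (g m)" w \<i> "\<lambda>h m. dy (h m) w"] dyw C2D(3)[OF _ w] by simp
  qed
  have each: "\<And>m. m \<in> I \<Longrightarrow> f_ww (g m) w = Kww (dx (dx (g m)) w) (dy (dx (g m)) w) (dx (dy (g m)) w) (dy (dy (g m)) w) \<and>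
         f_wwb (g m) w = Kwwb (dx (dx (g m)) w) (dy (dx (g m)) w) (dx (dy (g m)) w) (dy (dy (g m)) w) \<and>
         f_wbwb (g m) w = Kwbwb (dx (dx (g m)) w) (dy (dx (g m)) w) (dx (dy (g m)) w) (dy (dy (g m)) w)"
    using C2_formulas[OF oD w C2] by blast
  show ?thesis using sf each unfolding Kww_sum Kwwb_sum Kwbwb_sum
    by (auto intro!: sum.cong)
qed

theorem lemma9:
  fixes D :: "complex set" and fm :: "nat \<Rightarrow> complex \<Rightarrow> real" and n :: nat
    and F :: "complex \<Rightarrow> real \<Rightarrow> real"
  assumes "jordan_domain D"
    and "\<forall>m\<le>n. C2_on D (fm m)"
    and "\<forall>w\<in>D. f_ww (fm 0) w * f_wbwb (fm 0) w > 0"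
    and "F = (\<lambda>w t. \<Sum>m\<le>n. fm m w * t ^ m / fact m)"
  shows "(\<forall>w\<in>D. (\<lambda>t. f_wwb (\<lambda>z. F z t) w
                   - of_real t * csqrt (f_ww (\<lambda>z. F z t) w * f_wbwb (\<lambda>z. F z t) w))
                 \<in> o[at 0](\<lambda>t::real. (of_real t :: complex) ^ n))
     \<longleftrightarrow>
     (\<forall>m\<le>n. \<forall>w\<in>D. f_wwb (fm m) w =
        (of_nat m * (\<Sum>r<m. of_nat ((m - 1) choose r) * f_ww (fm r) w * f_wbwb (fm (m - r - 1)) w)
         - (1 / of_nat (m + 1)) *
           (\<Sum>r\<in>{2..<m}. of_nat ((m + 1) choose r) * f_wwb (fm r) w * f_wwb (fm (m - r + 1)) w))
        / (2 ^ (1 - (if m = 1 then 1 else 0)) * csqrt (f_ww (fm 0) w * f_wbwb (fm 0) w)))"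
proof -
  obtain cc where cc: "simple_path cc" "D = inside (path_image cc)"
    using assms(1) unfolding jordan_domain_def by blast
  have oD: "open D" unfolding cc(2)
    by (rule open_inside) (use cc(1) closed_path_image simple_path_imp_path in blast)
  have C2: "\<And>m. m \<in> {..n} \<Longrightarrow> C2_on D (fm m)" using assms(2) by auto
  have pointwise: "((\<lambda>t. f_wwb (\<lambda>z. F z t) w
                   - of_real t * csqrt (f_ww (\<lambda>z. F z t) w * f_wbwb (\<lambda>z. F z t) w))
                 \<in> o[at 0](\<lambda>t::real. (of_real t :: complex) ^ n))
     \<longleftrightarrow>
     (\<forall>m\<le>n. f_wwb (fm m) w =
        (of_nat m * (\<Sum>r<m. of_nat ((m - 1) choose r) * f_ww (fm r) w * f_wbwb (fm (m - r - 1)) w)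
         - (1 / of_nat (m + 1)) *
           (\<Sum>r\<in>{2..<m}. of_nat ((m + 1) choose r) * f_wwb (fm r) w * f_wwb (fm (m - r + 1)) w))
        / (2 ^ (1 - (if m = 1 then 1 else 0)) * csqrt (f_ww (fm 0) w * f_wbwb (fm 0) w)))"
    if w: "w \<in> D" for w
  proof -
    define a where "a = (\<lambda>m. f_ww (fm m) w)"
    define c where "c = (\<lambda>m. f_wwb (fm m) w)"
    have bw: "f_wbwb (fm j) w = cnj (a j)" if "j \<le> n" for j
      using C2_formulas[OF oD w assms(2)[rule_format, OF that]] unfolding a_def Kwbwb_cnj by simp
    have a0: "a 0 \<noteq> 0" using assms(3) w bw[of 0] by (auto simp: a_def)
    have Fe: "(\<lambda>z. F z t) = (\<lambda>z. \<Sum>m\<in>{..n}. (t ^ m / fact m) * fm m z)" for t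
      unfolding assms(4) by (auto intro!: sum.cong)
    have L: "f_ww (\<lambda>z. F z t) w = (\<Sum>m\<in>{..n}. of_real (t ^ m / fact m) * f_ww (fm m) w) \<and>
         f_wwb (\<lambda>z. F z t) w = (\<Sum>m\<in>{..n}. of_real (t ^ m / fact m) * f_wwb (fm m) w) \<and>
         f_wbwb (\<lambda>z. F z t) w = (\<Sum>m\<in>{..n}. of_real (t ^ m / fact m) * f_wbwb (fm m) w)" for t
      unfolding Fe by (rule lin_formulas[OF oD w C2])
    define P where "P = (\<lambda>t::real. \<Sum>m\<le>n. complex_of_real (t^m/fact m) * a m)"
    define T where "T = (\<lambda>t::real. \<Sum>m\<le>n. complex_of_real (t^m/fact m) * c m)"
    have e1: "f_ww (\<lambda>z. F z t) w = P t" for t using L[of t] unfolding P_def a_def by simp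
    have e2: "f_wwb (\<lambda>z. F z t) w = T t" for t using L[of t] unfolding T_def c_def by simp
    have e3: "f_wbwb (\<lambda>z. F z t) w = cnj (P t)" for t
      using L[of t] bw unfolding P_def by (simp add: cnj_sum)
    have cs: "csqrt (P t * cnj (P t)) = of_real (cmod (P t))" for t
    proof -
      have "P t * cnj (P t) = of_real ((cmod (P t))^2)" by (simp only: complex_norm_square)
      then show ?thesis by simp
    qed
    have lhs: "((\<lambda>t. f_wwb (\<lambda>z. F z t) w
                   - of_real t * csqrt (f_ww (\<lambda>z. F z t) w * f_wbwb (\<lambda>z. F z t) w))
                 \<in> o[at 0](\<lambda>t::real. (of_real t :: complex) ^ n))
       \<longleftrightarrow> (c 0 = 0 \<and> (0 < n \<longrightarrow> c 1 = of_real (cmod (a 0)) \<and> (\<forall>k<n. EQ a c k)))"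
      unfolding e1 e2 e3 cs unfolding P_def T_def by (rule AL1[where a=a and c=c and n=n, OF a0])
    have rhs: "(\<forall>m\<le>n. f_wwb (fm m) w =
        (of_nat m * (\<Sum>r<m. of_nat ((m - 1) choose r) * f_ww (fm r) w * f_wbwb (fm (m - r - 1)) w)
         - (1 / of_nat (m + 1)) *
           (\<Sum>r\<in>{2..<m}. of_nat ((m + 1) choose r) * f_wwb (fm r) w * f_wwb (fm (m - r + 1)) w))
        / (2 ^ (1 - (if m = 1 then 1 else 0)) * csqrt (f_ww (fm 0) w * f_wbwb (fm 0) w)))
      \<longleftrightarrow> (\<forall>m\<le>n. c m =
        (of_nat m * (\<Sum>r<m. of_nat ((m - 1) choose r) * a r * cnj (a (m - r - 1)))
         - (1 / of_nat (m + 1)) *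
           (\<Sum>r\<in>{2..<m}. of_nat ((m + 1) choose r) * c r * c (m - r + 1)))
        / (2 ^ (1 - (if m = 1 then 1 else 0)) * csqrt (a 0 * cnj (a 0))))"
    proof -
      have "(\<Sum>r<m. of_nat ((m - 1) choose r) * f_ww (fm r) w * f_wbwb (fm (m - r - 1)) w)
          = (\<Sum>r<m. of_nat ((m - 1) choose r) * a r * cnj (a (m - r - 1)))" if "m \<le> n" for m
        by (rule sum.cong) (use that bw in \<open>auto simp: a_def\<close>)
      then show ?thesis using bw[of 0] unfolding a_def c_def by (auto cong: conj_cong)
    qed
    show ?thesis unfolding lhs rhs by (rule AL2[where a=a and c=c and n=n, OF a0, symmetric])
  qed
  show ?thesis using pointwise by blast
qed

end
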